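(* Suppose that $\varphi,\psi\in\boldsymbol{\mathcal X}_N$ satisfy $\mathrm{dist}_\infty(\operatorname{supp} \varphi, \operatorname{supp} \psi) > l-1$. Then \begin{equation} \langle \mathscr{T} \varphi, \psi \rangle = 0, \quad \langle \mathscr{T}' \varphi, \psi \rangle = 0, \quad \langle \mathscr{R} \varphi, \psi \rangle = 0, \quad \langle \mathscr{R}' \varphi, \psi \rangle = 0. \end{equation}
   Context: Let $L\ge 3$ be an odd integer, $N\ge 1$ an integer, $d\ge 2$, $m\ge1$, and let $\mathbb T_N=(\mathbb Z/L^N\mathbb Z)^d$ be the discrete torus, with the distance $\rho_\infty(x,y)=\inf\{|x-y+z|_\infty : z\in (L^N\mathbb Z)^d\}$ and, for sets $M_1,M_2\subset\mathbb T_N$, $\mathrm{dist}_\infty(M_1,M_2)=\min\{\rho_\infty(x,y): x\in M_1, y\in M_2\}$. Let $\boldsymbol{\mathcal X}_N$ be the space of functions $\varphi:\mathbb T_N\to\mathbb R^m$ with $\sum_{x\in\mathbb T_N}\varphi(x)=0$, with scalar product $\langle\varphi,\psi\rangle=\sum_{x\in\mathbb T_N}\langle\varphi(x),\psi(x)\rangle_{\mathbb R^m}$. Let $(\nabla\varphi)^r_j(x)=\varphi^r(x+e_j)-\varphi^r(x)$ and $(\nabla^*\varphi)^r_j(x)=\varphi^r(x-e_j)-\varphi^r(x)$. Let $A:\mathbb R^{m\times d}\to\mathbb R^{m\times d}$ be linear, symmetric and positive definite, define $(\varphi,\psi)_+=\sum_{x\in\mathbb T_N}\langle A\nabla\varphi(x),\nabla\psi(x)\rangle_{\mathbb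 R^{m\times d}}$ (a scalar product on $\boldsymbol{\mathcal X}_N$; the resulting Hilbert space is $\boldsymbol{\mathcal H}_+$) and $\mathscr A=\nabla^*A\nabla$, so that $\langle\mathscr A\varphi,\psi\rangle=(\varphi,\psi)_+$. Let $l\ge 3$ be an integer with $l-1<L^N$, $Q=\{1,\ldots,l-1\}^d\subset\mathbb T_N$, and for $x\in\mathbb T_N$ let $\boldsymbol{\mathcal H}_+(Q+x)=\{\varphi\in\boldsymbol{\mathcal X}_N:\varphi=0 \text{ on } \mathbb T_N\setminus(Q+x)\}$. Let $\varPi_x$ be the $(\cdot,\cdot)_+$-orthogonal projection of $\boldsymbol{\mathcal H}_+$ onto $\boldsymbol{\mathcal H}_+(Q+x)$. Define $\mathscr T=l^{-d}\sum_{x\in\mathbb T_N}\varPi_x$, its dual $\mathscr T'$ with respect to $\langle\cdot,\cdot\rangle$ (i.e. $\langle\mathscr T'\varphi,\psi\rangle=\langle\varphi,\mathscr T\psi\rangle$; equivalently $\mathscr T'=\mathscr A\mathscr T\mathscr A^{-1}$), $\mathscr R=\mathrm{id}-\mathscr T$ and $\mathscr R'=\mathrm{id}-\mathscr T'$. *)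

theory Defs
  imports "HOL-Analysis.Analysis"
begin

text \<open>Discrete torus (Z / M Z)^d with M = L^N, points represented by their
  canonical representatives in {0..<M}^d; the dimension d is CARD('d).
  Fields take values in R^m with m = CARD('m); matrices in R^{m x d} are
  real^'d^'m (row index r :: 'm, column index j :: 'd).\<close>

definition torus :: "int \<Rightarrow> (int^'d) set" where
  "torus M = {x. \<forall>j. 0 \<le> x$j \<and> x$j < M}"

definition tadd :: "int \<Rightarrow> int^'d \<Rightarrow> int^'d \<Rightarrow> int^'d" where
  "tadd M x y = (\<chi> j. (x$j + y$j) mod M)"

definition rho_inf :: "int \<Rightarrow> int^'d \<Rightarrow> int^'d \<Rightarrow> int" where
  "rho_inf M x y = Inf {Max (range (\<lambda>j. \<bar>x$j - y$j + z$j\<bar>)) | z. \<forall>j. M dvd z$j}"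

definition dist_inf :: "int \<Rightarrow> (int^'d) set \<Rightarrow> (int^'d) set \<Rightarrow> int" where
  "dist_inf M S1 S2 = Min {rho_inf M x y | x y. x \<in> S1 \<and> y \<in> S2}"

definition XN :: "int \<Rightarrow> (int^'d \<Rightarrow> real^'m) set" where
  "XN M = {\<phi>. (\<forall>x. x \<notin> torus M \<longrightarrow> \<phi> x = 0) \<and> (\<Sum>x\<in>torus M. \<phi> x) = 0}"

definition supp :: "int \<Rightarrow> (int^'d \<Rightarrow> real^'m) \<Rightarrow> (int^'d) set" where
  "supp M \<phi> = {x \<in> torus M. \<phi> x \<noteq> 0}"

definition ip :: "int \<Rightarrow> (int^'d \<Rightarrow> real^'m) \<Rightarrow> (int^'d \<Rightarrow> real^'m) \<Rightarrow> real" where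
  "ip M \<phi> \<psi> = (\<Sum>x\<in>torus M. \<phi> x \<bullet> \<psi> x)"

definition grad :: "int \<Rightarrow> (int^'d \<Rightarrow> real^'m) \<Rightarrow> int^'d \<Rightarrow> real^'d^'m" where
  "grad M \<phi> x = (\<chi> r j. \<phi> (tadd M x (axis j 1)) $ r - \<phi> x $ r)"

definition ipA :: "int \<Rightarrow> (real^'d^'m \<Rightarrow> real^'d^'m) \<Rightarrow>
    (int^'d \<Rightarrow> real^'m) \<Rightarrow> (int^'d \<Rightarrow> real^'m) \<Rightarrow> real" where
  "ipA M A \<phi> \<psi> = (\<Sum>x\<in>torus M. A (grad M \<phi> x) \<bullet> grad M \<psi> x)"

definition cubeQ :: "nat \<Rightarrow> (int^'d) set" where
  "cubeQ l = {y. \<forall>j. 1 \<le> y$j \<and> y$j \<le> int l - 1}"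

definition shiftQ :: "int \<Rightarrow> nat \<Rightarrow> int^'d \<Rightarrow> (int^'d) set" where
  "shiftQ M l x = (\<lambda>y. tadd M y x) ` cubeQ l"

definition Hloc :: "int \<Rightarrow> nat \<Rightarrow> int^'d \<Rightarrow> (int^'d \<Rightarrow> real^'m) set" where
  "Hloc M l x = {\<phi> \<in> XN M. \<forall>y \<in> torus M - shiftQ M l x. \<phi> y = 0}"

definition Pi_proj :: "int \<Rightarrow> nat \<Rightarrow> (real^'d^'m \<Rightarrow> real^'d^'m) \<Rightarrow> int^'d \<Rightarrow>
    (int^'d \<Rightarrow> real^'m) \<Rightarrow> (int^'d \<Rightarrow> real^'m)" where
  "Pi_proj M l A x \<phi> = (THE \<psi>. \<psi> \<in> Hloc M l x \<and>
      (\<forall>\<zeta> \<in> Hloc M l x. ipA M A (\<lambda>y. \<phi> y - \<psi> y) \<zeta> = 0))"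

definition opT :: "int \<Rightarrow> nat \<Rightarrow> (real^'d^'m \<Rightarrow> real^'d^'m) \<Rightarrow>
    (int^'d \<Rightarrow> real^'m) \<Rightarrow> (int^'d \<Rightarrow> real^'m)" where
  "opT M l A \<phi> = (\<lambda>y. (1 / real l ^ CARD('d)) *\<^sub>R
      (\<Sum>x\<in>torus M. Pi_proj M l A x \<phi> y))"

definition opT' :: "int \<Rightarrow> nat \<Rightarrow> (real^'d^'m \<Rightarrow> real^'d^'m) \<Rightarrow>
    (int^'d \<Rightarrow> real^'m) \<Rightarrow> (int^'d \<Rightarrow> real^'m)" where
  "opT' M l A \<phi> = (THE \<eta>. \<eta> \<in> XN M \<and>
      (\<forall>\<psi> \<in> XN M. ip M \<eta> \<psi> = ip M \<phi> (opT M l A \<psi>)))"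

definition opR :: "int \<Rightarrow> nat \<Rightarrow> (real^'d^'m \<Rightarrow> real^'d^'m) \<Rightarrow>
    (int^'d \<Rightarrow> real^'m) \<Rightarrow> (int^'d \<Rightarrow> real^'m)" where
  "opR M l A \<phi> = (\<lambda>y. \<phi> y - opT M l A \<phi> y)"

definition opR' :: "int \<Rightarrow> nat \<Rightarrow> (real^'d^'m \<Rightarrow> real^'d^'m) \<Rightarrow>
    (int^'d \<Rightarrow> real^'m) \<Rightarrow> (int^'d \<Rightarrow> real^'m)" where
  "opR' M l A \<phi> = (\<lambda>y. \<phi> y - opT' M l A \<phi> y)"

end

theory Submission
  imports Defs
begin

lemma finite_torus: "finite (torus M :: (int^'d) set)"
proof -
  have "torus M \<subseteq> (\<lambda>f. vec_lambda f) ` (PiE UNIV (\<lambda>_::'d. {0..<M}))"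
  proof
    fix x :: "int^'d" assume "x \<in> torus M"
    then have "(\<lambda>j. x$j) \<in> PiE UNIV (\<lambda>_. {0..<M})" by (auto simp: torus_def)
    moreover have "x = vec_lambda (\<lambda>j. x$j)" by simp
    ultimately show "x \<in> (\<lambda>f. vec_lambda f) ` (PiE UNIV (\<lambda>_::'d. {0..<M}))" by blast
  qed
  moreover have "finite ((\<lambda>f. vec_lambda f) ` (PiE UNIV (\<lambda>_::'d. {0..<M})))"
    by (intro finite_imageI finite_PiE) auto
  ultimately show ?thesis by (rule finite_subset)
qed

lemma tadd_torus: "M > 0 \<Longrightarrow> tadd M x y \<in> torus M"
  by (simp add: tadd_def torus_def)

lemma zero_torus: "M > 0 \<Longrightarrow> (0::int^'d) \<in> torus M"
  by (simp add: torus_def)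

lemma tadd_zero: "x \<in> torus M \<Longrightarrow> tadd M x 0 = x"
  by (simp add: tadd_def torus_def vec_eq_iff)

section \<open>Linear algebra helpers\<close>

definition Wsp :: "('a \<times> 'm) set \<Rightarrow> ('a \<Rightarrow> real^'m) set" where
  "Wsp P = {\<phi>. \<forall>t r. \<phi> t $ r \<noteq> 0 \<longrightarrow> (t,r) \<in> P}"

lemma Wsp_comb: "a \<in> Wsp P \<Longrightarrow> b \<in> Wsp P \<Longrightarrow> (\<lambda>y. a y + c *\<^sub>R b y) \<in> Wsp P"
  unfolding Wsp_def by (auto; metis add_0 mult_zero_right)

lemma Wsp_mono: "P \<subseteq> Q \<Longrightarrow> Wsp P \<subseteq> Wsp Q"
  unfolding Wsp_def by auto

lemma riesz_gen:
  fixes V :: "('a \<Rightarrow> real^'m) set" and B :: "('a \<Rightarrow> real^'m) \<Rightarrow> ('a \<Rightarrow> real^'m) \<Rightarrow> real"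
  assumes V0: "(\<lambda>y. 0) \<in> V"
   and Vadd: "\<And>a b. a\<in>V \<Longrightarrow> b\<in>V \<Longrightarrow> (\<lambda>y. a y + b y) \<in> V"
   and Vsc: "\<And>a c. a\<in>V \<Longrightarrow> (\<lambda>y. c *\<^sub>R a y) \<in> V"
   and Badd: "\<And>a b c. a\<in>V \<Longrightarrow> b\<in>V \<Longrightarrow> c\<in>V \<Longrightarrow> B (\<lambda>y. a y + b y) c = B a c + B b c"
   and Bsc: "\<And>a c k. a\<in>V \<Longrightarrow> c\<in>V \<Longrightarrow> B (\<lambda>y. k *\<^sub>R a y) c = k * B a c"
   and Bsym: "\<And>a b. a\<in>V \<Longrightarrow> b\<in>V \<Longrightarrow> B a b = B b a"
   and Bpos: "\<And>a. a\<in>V \<Longrightarrow> B a a = 0 \<Longrightarrow> a = (\<lambda>y. 0)"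
   and fin: "finite P"
  shows "\<forall>f. (\<forall>a b. a\<in>V \<longrightarrow> b\<in>V \<longrightarrow> f (\<lambda>y. a y + b y) = f a + f b)
      \<and> (\<forall>a k. a\<in>V \<longrightarrow> f (\<lambda>y. k *\<^sub>R a y) = k * f a)
      \<longrightarrow> (\<exists>r\<in>V \<inter> Wsp P. \<forall>\<zeta>\<in>V \<inter> Wsp P. B r \<zeta> = f \<zeta>)"
  using fin
proof (induction P rule: finite_induct)
  case empty
  show ?case
  proof (intro allI impI)
    fix f :: "('a \<Rightarrow> real^'m) \<Rightarrow> real"
    assume lin: "(\<forall>a b. a\<in>V \<longrightarrow> b\<in>V \<longrightarrow> f (\<lambda>y. a y + b y) = f a + f b)
      \<and> (\<forall>a k. a\<in>V \<longrightarrow> f (\<lambda>y. k *\<^sub>R a y) = k * f a)"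
    have W0: "Wsp {} = {(\<lambda>y. 0) :: 'a \<Rightarrow> real^'m}"
      by (auto simp: Wsp_def vec_eq_iff)
    have z: "(\<lambda>y. (0::real) *\<^sub>R (0::real^'m)) = (\<lambda>y. 0)" by simp
    have f0: "f (\<lambda>y. 0) = 0"
    proof -
      have "f (\<lambda>y. (0::real) *\<^sub>R ((\<lambda>y. 0::real^'m) y)) = 0 * f (\<lambda>y. 0)"
        using lin V0 by blast
      then show ?thesis by simp
    qed
    have B0: "B (\<lambda>y. 0) (\<lambda>y. 0) = 0"
      using Bsc[OF V0 V0, of 0] z by simp
    show "\<exists>r\<in>V \<inter> Wsp {}. \<forall>\<zeta>\<in>V \<inter> Wsp {}. B r \<zeta> = f \<zeta>"
      using V0 W0 f0 B0 by auto
  qed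
next
  case (insert p P)
  obtain t s where p: "p = (t,s)" by (cases p)
  have sub: "Wsp P \<subseteq> Wsp (insert p P)" by (rule Wsp_mono) auto
  have Vsub: "\<And>a b c. a\<in>V \<Longrightarrow> b\<in>V \<Longrightarrow> (\<lambda>y. a y + c *\<^sub>R b y) \<in> V"
    by (rule Vadd, assumption, rule Vsc)
  have Bsub: "\<And>a b d c. a\<in>V \<Longrightarrow> b\<in>V \<Longrightarrow> d \<in> V \<Longrightarrow> B (\<lambda>y. a y + c *\<^sub>R b y) d = B a d + c * B b d"
    using Badd Bsc Vsc by simp
  show ?case
  proof (intro allI impI)
    fix f :: "('a \<Rightarrow> real^'m) \<Rightarrow> real"
    assume lin: "(\<forall>a b. a\<in>V \<longrightarrow> b\<in>V \<longrightarrow> f (\<lambda>y. a y + b y) = f a + f b)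
      \<and> (\<forall>a k. a\<in>V \<longrightarrow> f (\<lambda>y. k *\<^sub>R a y) = k * f a)"
    have fsub: "\<And>a b c. a\<in>V \<Longrightarrow> b\<in>V \<Longrightarrow> f (\<lambda>y. a y + c *\<^sub>R b y) = f a + c * f b"
      using lin Vsc by simp
    show "\<exists>r\<in>V \<inter> Wsp (insert p P). \<forall>\<zeta>\<in>V \<inter> Wsp (insert p P). B r \<zeta> = f \<zeta>"
    proof (cases "V \<inter> Wsp (insert p P) \<subseteq> Wsp P")
      case True
      from insert.IH lin obtain r where "r \<in> V \<inter> Wsp P" "\<forall>\<zeta>\<in>V \<inter> Wsp P. B r \<zeta> = f \<zeta>"
        by blast
      then show ?thesis using True sub by blast
    next
      case False
      then obtain v where v: "v \<in> V" "v \<in> Wsp (insert p P)" "v \<notin> Wsp P" by blast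
      have vts: "v t $ s \<noteq> 0" using v p unfolding Wsp_def by auto
      define g where "g = (\<lambda>\<zeta>. B v \<zeta>)"
      have "(\<forall>a b. a\<in>V \<longrightarrow> b\<in>V \<longrightarrow> g (\<lambda>y. a y + b y) = g a + g b)
      \<and> (\<forall>a k. a\<in>V \<longrightarrow> g (\<lambda>y. k *\<^sub>R a y) = k * g a)"
      proof (intro conjI allI impI)
        fix a b assume ab: "a \<in> V" "b \<in> V"
        have "g (\<lambda>y. a y + b y) = B (\<lambda>y. a y + b y) v" unfolding g_def using Bsym Vadd ab v(1) by blast
        also have "\<dots> = B a v + B b v" using Badd ab v(1) by blast
        also have "\<dots> = g a + g b" unfolding g_def using Bsym ab v(1) by simp
        finally show "g (\<lambda>y. a y + b y) = g a + g b" .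
      next
        fix a k assume a: "a \<in> V"
        have "g (\<lambda>y. k *\<^sub>R a y) = B (\<lambda>y. k *\<^sub>R a y) v" unfolding g_def using Bsym Vsc a v(1) by blast
        also have "\<dots> = k * B a v" using Bsc a v(1) by blast
        also have "\<dots> = k * g a" unfolding g_def using Bsym a v(1) by simp
        finally show "g (\<lambda>y. k *\<^sub>R a y) = k * g a" .
      qed
      with insert.IH obtain q where q: "q \<in> V" "q \<in> Wsp P" "\<forall>\<zeta>\<in>V \<inter> Wsp P. B q \<zeta> = B v \<zeta>"
        unfolding g_def by blast
      define u where "u = (\<lambda>y. v y + (-1) *\<^sub>R q y)"
      have uV: "u \<in> V" unfolding u_def using v(1) q(1) by (rule Vsub)
      have uW: "u \<in> Wsp (insert p P)" unfolding u_def using v(2) subsetD[OF sub q(2)] by (rule Wsp_comb)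
      have qts: "q t $ s = 0" using q(2) insert.hyps(2) p unfolding Wsp_def by auto
      have uts: "u t $ s \<noteq> 0" using vts qts unfolding u_def by simp
      have Bu: "\<forall>\<zeta>\<in>V \<inter> Wsp P. B u \<zeta> = 0"
      proof
        fix \<zeta> assume z: "\<zeta> \<in> V \<inter> Wsp P"
        have "B u \<zeta> = B v \<zeta> + (-1) * B q \<zeta>" unfolding u_def
          using v(1) q(1) by (rule Bsub) (use z in blast)
        then show "B u \<zeta> = 0" using q(3) z by simp
      qed
      have Buu: "B u u \<noteq> 0"
      proof
        assume "B u u = 0"
        then have "u = (\<lambda>y. 0)" using Bpos uV by blast
        then show False using uts by simp
      qed
      from insert.IH lin obtain w where w: "w \<in> V" "w \<in> Wsp P" "\<forall>\<zeta>\<in>V \<inter> Wsp P. B w \<zeta> = f \<zeta>"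
        by blast
      define c where "c = f u / B u u"
      define r where "r = (\<lambda>y. w y + c *\<^sub>R u y)"
      have rV: "r \<in> V" unfolding r_def using w(1) uV by (rule Vsub)
      have rW: "r \<in> Wsp (insert p P)" unfolding r_def using subsetD[OF sub w(2)] uW by (rule Wsp_comb)
      have Bru: "B r u = f u"
      proof -
        have "B r u = B w u + c * B u u" unfolding r_def using Bsub w uV by simp
        also have "B w u = B u w" using Bsym w uV by simp
        also have "B u w = 0" using Bu w by simp
        finally show ?thesis unfolding c_def using Buu by simp
      qed
      have "\<forall>\<zeta>\<in>V \<inter> Wsp (insert p P). B r \<zeta> = f \<zeta>"
      proof
        fix \<zeta> assume z: "\<zeta> \<in> V \<inter> Wsp (insert p P)"
        define k where "k = \<zeta> t $ s / u t $ s"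
        define \<zeta>0 where "\<zeta>0 = (\<lambda>y. \<zeta> y + (-k) *\<^sub>R u y)"
        have z0V: "\<zeta>0 \<in> V" unfolding \<zeta>0_def using _ uV by (rule Vsub) (use z in blast)
        have z0W': "\<zeta>0 \<in> Wsp (insert p P)" unfolding \<zeta>0_def using _ uW by (rule Wsp_comb) (use z in blast)
        have "\<zeta>0 t $ s = 0" unfolding \<zeta>0_def k_def using uts by simp
        then have z0W: "\<zeta>0 \<in> Wsp P" using z0W' p unfolding Wsp_def by auto
        have zeq: "\<zeta> = (\<lambda>y. \<zeta>0 y + k *\<^sub>R u y)" unfolding \<zeta>0_def by (simp add: algebra_simps)
        have Brz0: "B r \<zeta>0 = f \<zeta>0"
        proof -
          have "B r \<zeta>0 = B w \<zeta>0 + c * B u \<zeta>0" unfolding r_def using Bsub w uV z0V by simp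
          then show ?thesis using Bu w z0V z0W by simp
        qed
        have "B r \<zeta> = B \<zeta> r" using Bsym rV z by blast
        also have "\<dots> = B \<zeta>0 r + k * B u r" using Bsub z0V uV rV by (subst zeq) simp
        also have "\<dots> = B r \<zeta>0 + k * B r u" using Bsym z0V uV rV by simp
        also have "\<dots> = f \<zeta>0 + k * f u" using Brz0 Bru by simp
        also have "\<dots> = f \<zeta>" using fsub[OF z0V uV, of k] zeq by simp
        finally show "B r \<zeta> = f \<zeta>" .
      qed
      then show ?thesis using rV rW by blast
    qed
  qed
qed

lemma riesz_ex1:
  fixes V :: "('a \<Rightarrow> real^'m) set" and B :: "('a \<Rightarrow> real^'m) \<Rightarrow> ('a \<Rightarrow> real^'m) \<Rightarrow> real"
  assumes V0: "(\<lambda>y. 0) \<in> V"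
   and Vadd: "\<And>a b. a\<in>V \<Longrightarrow> b\<in>V \<Longrightarrow> (\<lambda>y. a y + b y) \<in> V"
   and Vsc: "\<And>a c. a\<in>V \<Longrightarrow> (\<lambda>y. c *\<^sub>R a y) \<in> V"
   and Badd: "\<And>a b c. a\<in>V \<Longrightarrow> b\<in>V \<Longrightarrow> c\<in>V \<Longrightarrow> B (\<lambda>y. a y + b y) c = B a c + B b c"
   and Bsc: "\<And>a c k. a\<in>V \<Longrightarrow> c\<in>V \<Longrightarrow> B (\<lambda>y. k *\<^sub>R a y) c = k * B a c"
   and Bsym: "\<And>a b. a\<in>V \<Longrightarrow> b\<in>V \<Longrightarrow> B a b = B b a"
   and Bpos: "\<And>a. a\<in>V \<Longrightarrow> B a a = 0 \<Longrightarrow> a = (\<lambda>y. 0)"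
   and fin: "finite P" and VW: "V \<subseteq> Wsp P"
   and fadd: "\<And>a b. a\<in>V \<Longrightarrow> b\<in>V \<Longrightarrow> f (\<lambda>y. a y + b y) = f a + f b"
   and fsc: "\<And>a k. a\<in>V \<Longrightarrow> f (\<lambda>y. k *\<^sub>R a y) = k * f a"
  shows "\<exists>!r. r \<in> V \<and> (\<forall>\<zeta>\<in>V. B r \<zeta> = f \<zeta>)"
proof -
  have VI: "V \<inter> Wsp P = V" using VW by blast
  have "\<exists>r\<in>V \<inter> Wsp P. \<forall>\<zeta>\<in>V \<inter> Wsp P. B r \<zeta> = f \<zeta>"
    apply (rule riesz_gen[rule_format])
    subgoal by (rule V0)
    subgoal by (rule Vadd)
    subgoal by (rule Vsc)
    subgoal by (rule Badd)
    subgoal by (rule Bsc)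
    subgoal by (rule Bsym)
    subgoal by (rule Bpos)
    subgoal by (rule fin)
    subgoal using fadd fsc by simp
    done
  then obtain r where r: "r \<in> V" "\<forall>\<zeta>\<in>V. B r \<zeta> = f \<zeta>" unfolding VI by blast
  show ?thesis
  proof (rule ex1I[of _ r])
    show "r \<in> V \<and> (\<forall>\<zeta>\<in>V. B r \<zeta> = f \<zeta>)" using r by blast
  next
    fix r' assume r': "r' \<in> V \<and> (\<forall>\<zeta>\<in>V. B r' \<zeta> = f \<zeta>)"
    define d where "d = (\<lambda>y. r' y + (-1) *\<^sub>R r y)"
    have dV: "d \<in> V" unfolding d_def using r'[THEN conjunct1] by (rule Vadd) (rule Vsc, rule r(1))
    have e1: "B (\<lambda>y. r' y + (-1) *\<^sub>R r y) d = B r' d + B (\<lambda>y. (-1) *\<^sub>R r y) d"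
      by (rule Badd) (use r r' dV Vsc[OF r(1), of "-1"] in auto)
    have e2: "B (\<lambda>y. (-1) *\<^sub>R r y) d = (-1) * B r d" by (rule Bsc) (use r dV in auto)
    have "B d d = B r' d + (-1) * B r d" using e1 e2 unfolding d_def[symmetric] by simp
    also have "\<dots> = 0" using r r' dV by simp
    finally have "d = (\<lambda>y. 0)" using Bpos dV by blast
    then show "r' = r" unfolding d_def by (auto simp: fun_eq_iff dest: fun_cong)
  qed
qed

section \<open>Gradient and the form (.,.)_+\<close>

lemma grad_add: "grad M (\<lambda>y. a y + b y) x = grad M a x + grad M b x"
  by (simp add: grad_def vec_eq_iff)

lemma grad_scale: "grad M (\<lambda>y. c *\<^sub>R a y) x = c *\<^sub>R grad M a x"
  by (simp add: grad_def vec_eq_iff algebra_simps)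

lemma grad_diff: "grad M (\<lambda>y. a y - b y) x = grad M a x - grad M b x"
  by (simp add: grad_def vec_eq_iff)

lemma ipA_add: "linear A \<Longrightarrow> ipA M A (\<lambda>y. a y + b y) c = ipA M A a c + ipA M A b c"
  unfolding ipA_def by (simp add: grad_add linear_add inner_add_left sum.distrib)

lemma ipA_scale: "linear A \<Longrightarrow> ipA M A (\<lambda>y. k *\<^sub>R a y) c = k * ipA M A a c"
  unfolding ipA_def by (simp add: grad_scale linear_scale sum_distrib_left)

lemma ipA_diff: "linear A \<Longrightarrow> ipA M A (\<lambda>y. a y - b y) c = ipA M A a c - ipA M A b c"
  unfolding ipA_def by (simp add: grad_diff linear_diff inner_diff_left sum_subtractf)

lemma ipA_sym: "\<forall>F G. A F \<bullet> G = F \<bullet> A G \<Longrightarrow> ipA M A a b = ipA M A b a"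
  unfolding ipA_def by (rule sum.cong) (auto simp: inner_commute)

lemma XN_add: "a \<in> XN M \<Longrightarrow> b \<in> XN M \<Longrightarrow> (\<lambda>y. a y + b y) \<in> XN M"
  unfolding XN_def by (simp add: sum.distrib)

lemma XN_scale: "a \<in> XN M \<Longrightarrow> (\<lambda>y. c *\<^sub>R a y) \<in> XN M"
  unfolding XN_def by (simp add: scaleR_sum_right[symmetric])

lemma XN_zero: "(\<lambda>y. 0) \<in> XN M"
  unfolding XN_def by simp

lemma Hloc_add: "a \<in> Hloc M l x \<Longrightarrow> b \<in> Hloc M l x \<Longrightarrow> (\<lambda>y. a y + b y) \<in> Hloc M l x"
  unfolding Hloc_def using XN_add by auto

lemma Hloc_scale: "a \<in> Hloc M l x \<Longrightarrow> (\<lambda>y. c *\<^sub>R a y) \<in> Hloc M l x"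
  unfolding Hloc_def using XN_scale by auto

lemma Hloc_zero: "(\<lambda>y. 0) \<in> Hloc M l x"
  unfolding Hloc_def using XN_zero by auto

lemma XN_Wsp: "XN M \<subseteq> Wsp (torus M \<times> UNIV)"
  unfolding XN_def Wsp_def by (auto simp: vec_eq_iff)

lemma Hloc_XN: "Hloc M l x \<subseteq> XN M"
  unfolding Hloc_def by auto

lemma ip_add: "ip M (\<lambda>y. a y + b y) c = ip M a c + ip M b c"
  unfolding ip_def by (simp add: inner_add_left sum.distrib)

lemma ip_scale: "ip M (\<lambda>y. k *\<^sub>R a y) c = k * ip M a c"
  unfolding ip_def by (simp add: sum_distrib_left)

lemma ip_diff: "ip M (\<lambda>y. a y - b y) c = ip M a c - ip M b c"
  unfolding ip_def by (simp add: inner_diff_left sum_subtractf)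

lemma ip_add_right: "ip M c (\<lambda>y. a y + b y) = ip M c a + ip M c b"
  unfolding ip_def by (simp add: inner_add_right sum.distrib)

lemma ip_scale_right: "ip M c (\<lambda>y. k *\<^sub>R a y) = k * ip M c a"
  unfolding ip_def by (simp add: sum_distrib_left)

lemma ip_sym: "ip M a b = ip M b a"
  unfolding ip_def by (simp add: inner_commute)

lemma ip_pos: "a \<in> XN M \<Longrightarrow> ip M a a = 0 \<Longrightarrow> a = (\<lambda>y. 0)"
proof -
  assume a: "a \<in> XN M" "ip M a a = 0"
  have "\<forall>x\<in>torus M. a x \<bullet> a x = 0"
    using a(2) unfolding ip_def by (subst (asm) sum_nonneg_eq_0_iff) (auto simp: finite_torus)
  then show ?thesis using a(1) unfolding XN_def by (auto simp: fun_eq_iff)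
qed

lemma const_torus:
  fixes \<phi> :: "int^'d \<Rightarrow> 'b"
  assumes M: "M > 0" and step: "\<forall>x\<in>torus M. \<forall>j. \<phi> (tadd M x (axis j 1)) = \<phi> x"
  shows "\<forall>x\<in>torus M. \<phi> x = \<phi> 0"
proof -
  have "\<forall>x\<in>torus M. (\<Sum>j\<in>UNIV. nat (x$j)) = n \<longrightarrow> \<phi> x = \<phi> 0" for n
  proof (induction n)
    case 0
    show ?case
    proof (intro ballI impI)
      fix x :: "int^'d" assume x: "x \<in> torus M" and s: "(\<Sum>j\<in>UNIV. nat (x$j)) = 0"
      have "\<forall>j. nat (x$j) = 0" using s by simp
      then have "x = 0" using x apply (auto simp: torus_def vec_eq_iff) by (meson order_antisym)
      then show "\<phi> x = \<phi> 0" by simp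
    qed
  next
    case (Suc n)
    show ?case
    proof (intro ballI impI)
      fix x :: "int^'d" assume x: "x \<in> torus M" and s: "(\<Sum>j\<in>UNIV. nat (x$j)) = Suc n"
      have "\<exists>j. nat (x$j) \<noteq> 0"
      proof (rule ccontr)
        assume "\<not> (\<exists>j. nat (x$j) \<noteq> 0)"
        then have "(\<Sum>j\<in>UNIV. nat (x$j)) = 0" by simp
        then show False using s by simp
      qed
      then obtain j where j: "x$j > 0" by (metis nat_le_0 not_le)
      define x' where "x' = x - axis j 1"
      have x'j: "x'$k = (if k = j then x$k - 1 else x$k)" for k by (simp add: x'_def axis_def)
      have "x$j < M" using x by (simp add: torus_def)
      then have x't: "x' \<in> torus M" using x j unfolding torus_def
        by (auto simp: x'j) (smt (verit))
      have tx: "tadd M x' (axis j 1) = x" using x by (auto simp: tadd_def torus_def vec_eq_iff x'j axis_def)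
      have s1: "(\<Sum>k\<in>UNIV. nat (x$k)) = nat (x$j) + (\<Sum>k\<in>UNIV-{j}. nat (x$k))"
        by (rule sum.remove) auto
      have s2: "(\<Sum>k\<in>UNIV. nat (x'$k)) = nat (x'$j) + (\<Sum>k\<in>UNIV-{j}. nat (x'$k))"
        by (rule sum.remove) auto
      have s3: "(\<Sum>k\<in>UNIV-{j}. nat (x'$k)) = (\<Sum>k\<in>UNIV-{j}. nat (x$k))"
        by (rule sum.cong) (auto simp: x'j)
      have "(\<Sum>k\<in>UNIV. nat (x'$k)) = n" using s s1 s2 s3 j by (simp add: x'j nat_diff_distrib)
      then have "\<phi> x' = \<phi> 0" using Suc.IH x't by blast
      moreover have "\<phi> (tadd M x' (axis j 1)) = \<phi> x'" using step x't by blast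
      ultimately show "\<phi> x = \<phi> 0" using tx by simp
    qed
  qed
  then show ?thesis by blast
qed

lemma ipA_pos:
  fixes a :: "int^'d \<Rightarrow> real^'m" and A :: "real^'d^'m \<Rightarrow> real^'d^'m"
  assumes M: "M>0" and lin: "linear A" and pos: "\<forall>F. F \<noteq> 0 \<longrightarrow> A F \<bullet> F > 0"
    and a: "a \<in> XN M" and z: "ipA M A a a = 0"
  shows "a = (\<lambda>y. 0)"
proof -
  have nn: "0 \<le> A F \<bullet> F" for F using pos linear_0[OF lin] by (cases "F = 0") (auto intro: less_imp_le)
  have "\<forall>x\<in>(torus M :: (int^'d) set). A (grad M a x) \<bullet> grad M a x = 0" using z unfolding ipA_def
    by (subst (asm) sum_nonneg_eq_0_iff) (auto simp: finite_torus nn)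
  then have g: "\<forall>x\<in>(torus M :: (int^'d) set). grad M a x = 0" using pos by (metis less_irrefl)
  have step: "\<forall>x\<in>torus M. \<forall>j. a (tadd M x (axis j 1)) = a x"
  proof (intro ballI allI)
    fix x :: "int^'d" and j assume "x \<in> torus M"
    then have "grad M a x = 0" using g by blast
    then have "\<forall>r. a (tadd M x (axis j 1)) $ r - a x $ r = 0" unfolding grad_def
      by (auto simp: vec_eq_iff)
    then show "a (tadd M x (axis j 1)) = a x" by (simp add: vec_eq_iff)
  qed
  have c: "\<forall>x\<in>torus M. a x = a 0" using const_torus[OF M step] .
  have "(\<Sum>x\<in>torus M. a x) = (\<Sum>x::int^'d\<in>torus M. a 0)" using c by (intro sum.cong) auto
  also have "\<dots> = real (card (torus M :: (int^'d) set)) *\<^sub>R a 0" by (simp add: scaleR_conv_of_real)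
  finally have "real (card (torus M :: (int^'d) set)) *\<^sub>R a 0 = 0" using a unfolding XN_def by simp
  moreover have "card (torus M :: (int^'d) set) > 0" using finite_torus zero_torus[OF M] card_gt_0_iff by blast
  ultimately have "a 0 = 0" by simp
  then show ?thesis using c a unfolding XN_def by (auto simp: fun_eq_iff)
qed

context
  fixes M :: int and A :: "real^'d^'m \<Rightarrow> real^'d^'m"
  assumes M: "M > 0" and lin: "linear A" and sym: "\<forall>F G. A F \<bullet> G = F \<bullet> A G"
    and pos: "\<forall>F. F \<noteq> 0 \<longrightarrow> A F \<bullet> F > 0"
begin

lemma Pi_ex1': "\<exists>!\<psi>. \<psi> \<in> Hloc M l x \<and> (\<forall>\<zeta>\<in>Hloc M l x. ipA M A \<psi> \<zeta> = ipA M A \<phi> \<zeta>)"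
proof (rule riesz_ex1[where P="torus M \<times> UNIV"])
  show "(\<lambda>y. 0) \<in> Hloc M l x" by (rule Hloc_zero)
  show "\<And>a b. a \<in> Hloc M l x \<Longrightarrow> b \<in> Hloc M l x \<Longrightarrow> (\<lambda>y. a y + b y) \<in> Hloc M l x" by (rule Hloc_add)
  show "\<And>a c. a \<in> Hloc M l x \<Longrightarrow> (\<lambda>y. c *\<^sub>R a y) \<in> Hloc M l x" by (rule Hloc_scale)
  show "\<And>a b c. ipA M A (\<lambda>y. a y + b y) c = ipA M A a c + ipA M A b c" by (rule ipA_add[OF lin])
  show "\<And>a c k. ipA M A (\<lambda>y. k *\<^sub>R a y) c = k * ipA M A a c" by (rule ipA_scale[OF lin])
  show "\<And>a b. ipA M A a b = ipA M A b a" by (rule ipA_sym[OF sym])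
  show "\<And>a. a \<in> Hloc M l x \<Longrightarrow> ipA M A a a = 0 \<Longrightarrow> a = (\<lambda>y. 0)"
    using ipA_pos[OF M lin pos] Hloc_XN by blast
  show "finite (torus M \<times> (UNIV :: 'm set))" by (simp add: finite_torus)
  show "Hloc M l x \<subseteq> Wsp (torus M \<times> UNIV)" using Hloc_XN XN_Wsp by blast
  show "\<And>a b. ipA M A \<phi> (\<lambda>y. a y + b y) = ipA M A \<phi> a + ipA M A \<phi> b"
    by (metis ipA_add[OF lin] ipA_sym[OF sym])
  show "\<And>a k. ipA M A \<phi> (\<lambda>y. k *\<^sub>R a y) = k * ipA M A \<phi> a"
    by (metis ipA_scale[OF lin] ipA_sym[OF sym])
qed

lemma Pi_ex1: "\<exists>!\<psi>. \<psi> \<in> Hloc M l x \<and> (\<forall>\<zeta>\<in>Hloc M l x. ipA M A (\<lambda>y. \<phi> y - \<psi> y) \<zeta> = 0)"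
proof -
  have e: "\<And>\<psi>. (\<forall>\<zeta>\<in>Hloc M l x. ipA M A (\<lambda>y. \<phi> y - \<psi> y) \<zeta> = 0) = (\<forall>\<zeta>\<in>Hloc M l x. ipA M A \<psi> \<zeta> = ipA M A \<phi> \<zeta>)"
    by (auto simp: ipA_diff[OF lin])
  show ?thesis using Pi_ex1'[of l x \<phi>] by (simp only: e)
qed

lemma Pi_prop: "Pi_proj M l A x \<phi> \<in> Hloc M l x \<and>
   (\<forall>\<zeta>\<in>Hloc M l x. ipA M A (Pi_proj M l A x \<phi>) \<zeta> = ipA M A \<phi> \<zeta>)"
proof -
  have "Pi_proj M l A x \<phi> \<in> Hloc M l x \<and>
   (\<forall>\<zeta>\<in>Hloc M l x. ipA M A (\<lambda>y. \<phi> y - Pi_proj M l A x \<phi> y) \<zeta> = 0)"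
    unfolding Pi_proj_def by (rule theI'[OF Pi_ex1])
  then show ?thesis by (simp add: ipA_diff[OF lin])
qed

lemma Pi_eq: "\<psi> \<in> Hloc M l x \<Longrightarrow> \<forall>\<zeta>\<in>Hloc M l x. ipA M A \<psi> \<zeta> = ipA M A \<phi> \<zeta> \<Longrightarrow>
   Pi_proj M l A x \<phi> = \<psi>"
  using Pi_ex1'[of l x \<phi>] Pi_prop[of l x \<phi>] by blast

end

section \<open>Geometry\<close>

definition close_pt :: "int \<Rightarrow> nat \<Rightarrow> int^'d \<Rightarrow> int^'d \<Rightarrow> bool" where
  "close_pt M l q b = (\<exists>w::int^'d. (\<forall>i. M dvd w$i) \<and> (\<forall>i. \<bar>q$i - b$i + w$i\<bar> \<le> int l - 1))"

lemma close_sym: fixes q b :: "int^'d" shows "close_pt M l q b \<Longrightarrow> close_pt M l b q"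
proof -
  assume "close_pt M l q b"
  then obtain w :: "int^'d" where w: "\<forall>i. M dvd w$i" "\<forall>i. \<bar>q$i - b$i + w$i\<bar> \<le> int l - 1"
    unfolding close_pt_def by blast
  have "(\<forall>i. M dvd (-w)$i) \<and> (\<forall>i. \<bar>b$i - q$i + (-w)$i\<bar> \<le> int l - 1)"
  proof (intro conjI allI)
    fix i
    show "M dvd (-w)$i" using w(1) by simp
    have "b$i - q$i + (-w)$i = -(q$i - b$i + w$i)" by simp
    then have "\<bar>b$i - q$i + (-w)$i\<bar> = \<bar>q$i - b$i + w$i\<bar>" by (simp only: abs_minus_cancel)
    then show "\<bar>b$i - q$i + (-w)$i\<bar> \<le> int l - 1" using w(2) by metis
  qed
  then show ?thesis unfolding close_pt_def by blast
qed

lemma close_refl: fixes q :: "int^'d" shows "l \<ge> 1 \<Longrightarrow> close_pt M l q q"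
  unfolding close_pt_def by (rule exI[of _ 0]) auto

lemma close_rho: fixes q b :: "int^'d" shows "close_pt M l q b \<Longrightarrow> rho_inf M q b \<le> int l - 1"
proof -
  assume "close_pt M l q b"
  then obtain w :: "int^'d" where w: "\<forall>i. M dvd w$i" "\<forall>i. \<bar>q$i - b$i + w$i\<bar> \<le> int l - 1"
    unfolding close_pt_def by blast
  let ?S = "{Max (range (\<lambda>j. \<bar>q$j - b$j + z$j\<bar>)) | z::int^'d. \<forall>j. M dvd z$j}"
  have mem: "Max (range (\<lambda>j. \<bar>q$j - b$j + w$j\<bar>)) \<in> ?S" using w(1) by blast
  have bdd: "bdd_below ?S"
  proof (rule bdd_belowI[of _ 0])
    fix e assume "e \<in> ?S"
    then obtain z :: "int^'d" where "e = Max (range (\<lambda>j. \<bar>q$j - b$j + z$j\<bar>))" by blast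
    moreover have "\<bar>q$undefined - b$undefined + z$undefined\<bar> \<le> Max (range (\<lambda>j. \<bar>q$j - b$j + z$j\<bar>))"
      by (rule Max_ge) auto
    ultimately show "0 \<le> e" by linarith
  qed
  have "rho_inf M q b \<le> Max (range (\<lambda>j. \<bar>q$j - b$j + w$j\<bar>))"
    unfolding rho_inf_def using cInf_lower[OF mem bdd] .
  also have "\<dots> \<le> int l - 1" using w(2) by (subst Max_le_iff) auto
  finally show ?thesis .
qed

lemma close_dist:
  assumes "q \<in> S1" "b \<in> S2" "S1 \<subseteq> torus M" "S2 \<subseteq> torus M" "close_pt M l q b"
  shows "dist_inf M S1 S2 \<le> int l - 1"
proof -
  have fin: "finite {rho_inf M x y | x y. x \<in> S1 \<and> y \<in> S2}"
  proof -
    have "{rho_inf M x y | x y. x \<in> S1 \<and> y \<in> S2} = (\<lambda>(x,y). rho_inf M x y) ` (S1 \<times> S2)" by auto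
    moreover have "finite (S1 \<times> S2)" using assms(3,4) finite_torus finite_subset by blast
    ultimately show ?thesis by simp
  qed
  have "dist_inf M S1 S2 \<le> rho_inf M q b" unfolding dist_inf_def
    by (rule Min_le[OF fin]) (use assms(1,2) in blast)
  also have "\<dots> \<le> int l - 1" using close_rho[OF assms(5)] .
  finally show ?thesis .
qed

lemma tadd_eq: "tadd M u v $ i = u$i + v$i - M * ((u$i + v$i) div M)"
  by (simp add: tadd_def minus_mult_div_eq_mod)

lemma geom:
  fixes x z d e \<beta> \<pi> :: "int^'d"
  assumes z: "z \<in> torus M" and \<beta>: "\<beta> \<in> cubeQ l" and \<pi>: "\<pi> \<in> cubeQ l"
    and p1: "p = tadd M \<pi> x" and p2: "p = tadd M z d" and q: "q = tadd M z e"
    and b: "b = tadd M \<beta> x"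
    and d: "\<forall>i. d$i = 0 \<or> d$i = 1" and e: "\<forall>i. e$i = 0 \<or> e$i = 1"
  shows "close_pt M l q b"
proof -
  define w :: "int^'d" where "w = (\<chi> i. (\<pi>$i - \<beta>$i + e$i - d$i) - (q$i - b$i))"
  have dv: "M dvd w$i" for i
  proof -
    have e1: "q$i = z$i + e$i - M * ((z$i + e$i) div M)" using q tadd_eq by simp
    have e2: "p$i = z$i + d$i - M * ((z$i + d$i) div M)" using p2 tadd_eq by simp
    have e3: "p$i = \<pi>$i + x$i - M * ((\<pi>$i + x$i) div M)" using p1 tadd_eq by simp
    have e4: "b$i = \<beta>$i + x$i - M * ((\<beta>$i + x$i) div M)" using b tadd_eq by simp
    have "w$i = M * ((z$i + e$i) div M - (\<beta>$i + x$i) div M - (z$i + d$i) div M + (\<pi>$i + x$i) div M)"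
      unfolding w_def using e1 e2 e3 e4 by (simp add: algebra_simps)
    then show ?thesis by simp
  qed
  have bd: "\<bar>q$i - b$i + w$i\<bar> \<le> int l - 1" for i
  proof -
    have "1 \<le> \<pi>$i" "\<pi>$i \<le> int l - 1" "1 \<le> \<beta>$i" "\<beta>$i \<le> int l - 1"
      using \<beta> \<pi> unfolding cubeQ_def by auto
    moreover have "0 \<le> e$i" "e$i \<le> 1" "0 \<le> d$i" "d$i \<le> 1" using d[rule_format, of i] e[rule_format, of i] by auto
    ultimately show ?thesis unfolding w_def by simp
  qed
  show ?thesis unfolding close_pt_def using dv bd by blast
qed



lemma grad_nz:
  assumes M: "M > 0" and z: "z \<in> torus M" and g: "grad M f z \<noteq> 0"
  shows "\<exists>d::int^'d. (\<forall>i. d$i = 0 \<or> d$i = 1) \<and> f (tadd M z d) \<noteq> 0"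
proof -
  obtain r j where rj: "f (tadd M z (axis j 1)) $ r - f z $ r \<noteq> 0"
    using g unfolding grad_def by (auto simp: vec_eq_iff)
  show ?thesis
  proof (cases "f (tadd M z (axis j 1)) = 0")
    case True
    then have "f z \<noteq> 0" using rj by auto
    then have "f (tadd M z 0) \<noteq> 0" using tadd_zero[OF z] by simp
    then show ?thesis by (intro exI[of _ 0]) auto
  next
    case False
    then show ?thesis by (intro exI[of _ "axis j 1"]) (auto simp: axis_def)
  qed
qed

lemma ip_zero_left: "ip M (\<lambda>y. 0) \<psi> = 0"
  unfolding ip_def by simp

context
  fixes M :: int and A :: "real^'d^'m \<Rightarrow> real^'d^'m"
  assumes M: "M > 0" and lin: "linear A" and sym: "\<forall>F G. A F \<bullet> G = F \<bullet> A G"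
    and pos: "\<forall>F. F \<noteq> 0 \<longrightarrow> A F \<bullet> F > 0"
begin

lemma Pi_far:
  fixes \<phi> \<psi> :: "int^'d \<Rightarrow> real^'m"
  assumes far: "\<forall>q\<in>supp M \<phi>. \<forall>b\<in>supp M \<psi>. \<not> close_pt M l q b"
    and b: "b \<in> supp M \<psi>" "b \<in> shiftQ M l x"
  shows "Pi_proj M l A x \<phi> = (\<lambda>y. 0)"
proof (rule Pi_eq[OF M lin sym pos])
  show "(\<lambda>y. 0) \<in> Hloc M l x" by (rule Hloc_zero)
  obtain \<beta> where \<beta>: "\<beta> \<in> cubeQ l" "b = tadd M \<beta> x" using b(2) unfolding shiftQ_def by blast
  show "\<forall>\<zeta>\<in>Hloc M l x. ipA M A (\<lambda>y. 0) \<zeta> = ipA M A \<phi> \<zeta>"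
  proof
    fix \<zeta> :: "int^'d \<Rightarrow> real^'m" assume \<zeta>: "\<zeta> \<in> Hloc M l x"
    have g0: "grad M (\<lambda>y. 0 :: real^'m) z = 0" for z :: "int^'d" by (simp add: grad_def vec_eq_iff)
    have "ipA M A (\<lambda>y. 0) \<zeta> = 0" unfolding ipA_def by (simp add: g0 linear_0[OF lin])
    moreover have "ipA M A \<phi> \<zeta> = 0" unfolding ipA_def
    proof (rule sum.neutral, rule ballI)
      fix z :: "int^'d" assume z: "z \<in> torus M"
      show "A (grad M \<phi> z) \<bullet> grad M \<zeta> z = 0"
      proof (rule ccontr)
        assume nz: "A (grad M \<phi> z) \<bullet> grad M \<zeta> z \<noteq> 0"
        then have g1: "grad M \<phi> z \<noteq> 0" using linear_0[OF lin] by auto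
        have g2: "grad M \<zeta> z \<noteq> 0" using nz by auto
        obtain e :: "int^'d" where e: "\<forall>i. e$i = 0 \<or> e$i = 1" "\<phi> (tadd M z e) \<noteq> 0"
          using grad_nz[OF M z g1] by blast
        obtain d :: "int^'d" where d: "\<forall>i. d$i = 0 \<or> d$i = 1" "\<zeta> (tadd M z d) \<noteq> 0"
          using grad_nz[OF M z g2] by blast
        have "tadd M z d \<in> shiftQ M l x"
          using \<zeta> d(2) tadd_torus[OF M] unfolding Hloc_def by blast
        then obtain \<pi> where \<pi>: "\<pi> \<in> cubeQ l" "tadd M z d = tadd M \<pi> x" unfolding shiftQ_def by blast
        have q: "tadd M z e \<in> supp M \<phi>" using e(2) tadd_torus[OF M] unfolding supp_def by blast
        have "close_pt M l (tadd M z e) b"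
          by (rule geom[OF z \<beta>(1) \<pi>(1) refl \<pi>(2)[symmetric] refl \<beta>(2) d(1) e(1)])
        then show False using far q b(1) by blast
      qed
    qed
    ultimately show "ipA M A (\<lambda>y. 0) \<zeta> = ipA M A \<phi> \<zeta>" by simp
  qed
qed

lemma ip_Pi_zero:
  fixes \<phi> \<psi> :: "int^'d \<Rightarrow> real^'m"
  assumes far: "\<forall>q\<in>supp M \<phi>. \<forall>b\<in>supp M \<psi>. \<not> close_pt M l q b"
  shows "ip M (Pi_proj M l A x \<phi>) \<psi> = 0"
proof (cases "\<exists>b. b \<in> supp M \<psi> \<and> b \<in> shiftQ M l x")
  case True
  then obtain b where "b \<in> supp M \<psi>" "b \<in> shiftQ M l x" by blast
  then have "Pi_proj M l A x \<phi> = (\<lambda>y. 0)" using Pi_far[OF far] by blast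
  then show ?thesis by (simp add: ip_zero_left)
next
  case False
  have H: "Pi_proj M l A x \<phi> \<in> Hloc M l x" using Pi_prop[OF M lin sym pos] by blast
  show ?thesis unfolding ip_def
  proof (rule sum.neutral, rule ballI)
    fix y :: "int^'d" assume y: "y \<in> torus M"
    show "Pi_proj M l A x \<phi> y \<bullet> \<psi> y = 0"
    proof (cases "y \<in> shiftQ M l x")
      case True
      then have "\<psi> y = 0" using False y unfolding supp_def by blast
      then show ?thesis by simp
    next
      case False
      then have "Pi_proj M l A x \<phi> y = 0" using H y unfolding Hloc_def by blast
      then show ?thesis by simp
    qed
  qed
qed

lemma T_zero:
  fixes \<phi> \<psi> :: "int^'d \<Rightarrow> real^'m"
  assumes far: "\<forall>q\<in>supp M \<phi>. \<forall>b\<in>supp M \<psi>. \<not> close_pt M l q b"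
  shows "ip M (opT M l A \<phi>) \<psi> = 0"
proof -
  have "ip M (opT M l A \<phi>) \<psi> = (1 / real l ^ CARD('d)) * (\<Sum>y\<in>torus M. \<Sum>x\<in>torus M. Pi_proj M l A x \<phi> y \<bullet> \<psi> y)"
    unfolding ip_def opT_def by (simp add: inner_sum_left sum_distrib_left)
  also have "(\<Sum>y\<in>torus M. \<Sum>x\<in>torus M. Pi_proj M l A x \<phi> y \<bullet> \<psi> y) = (\<Sum>x\<in>torus M. ip M (Pi_proj M l A x \<phi>) \<psi>)"
    unfolding ip_def by (rule sum.swap)
  also have "\<dots> = 0" using ip_Pi_zero[OF far] by simp
  finally show ?thesis by simp
qed

lemma Pi_add: "Pi_proj M l A x (\<lambda>y. a y + b y) = (\<lambda>y. Pi_proj M l A x a y + Pi_proj M l A x b y)"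
proof (rule Pi_eq[OF M lin sym pos])
  have Ha: "Pi_proj M l A x a \<in> Hloc M l x \<and> (\<forall>\<zeta>\<in>Hloc M l x. ipA M A (Pi_proj M l A x a) \<zeta> = ipA M A a \<zeta>)"
    by (rule Pi_prop[OF M lin sym pos])
  have Hb: "Pi_proj M l A x b \<in> Hloc M l x \<and> (\<forall>\<zeta>\<in>Hloc M l x. ipA M A (Pi_proj M l A x b) \<zeta> = ipA M A b \<zeta>)"
    by (rule Pi_prop[OF M lin sym pos])
  show "(\<lambda>y. Pi_proj M l A x a y + Pi_proj M l A x b y) \<in> Hloc M l x"
    using Ha Hb Hloc_add by blast
  show "\<forall>\<zeta>\<in>Hloc M l x. ipA M A (\<lambda>y. Pi_proj M l A x a y + Pi_proj M l A x b y) \<zeta> = ipA M A (\<lambda>y. a y + b y) \<zeta>"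
    using Ha Hb by (simp add: ipA_add[OF lin])
qed

lemma Pi_scale: "Pi_proj M l A x (\<lambda>y. k *\<^sub>R a y) = (\<lambda>y. k *\<^sub>R Pi_proj M l A x a y)"
proof (rule Pi_eq[OF M lin sym pos])
  have Ha: "Pi_proj M l A x a \<in> Hloc M l x \<and> (\<forall>\<zeta>\<in>Hloc M l x. ipA M A (Pi_proj M l A x a) \<zeta> = ipA M A a \<zeta>)"
    by (rule Pi_prop[OF M lin sym pos])
  show "(\<lambda>y. k *\<^sub>R Pi_proj M l A x a y) \<in> Hloc M l x"
    using Ha Hloc_scale by blast
  show "\<forall>\<zeta>\<in>Hloc M l x. ipA M A (\<lambda>y. k *\<^sub>R Pi_proj M l A x a y) \<zeta> = ipA M A (\<lambda>y. k *\<^sub>R a y) \<zeta>"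
    using Ha by (simp add: ipA_scale[OF lin])
qed

lemma opT_add: "opT M l A (\<lambda>y. a y + b y) = (\<lambda>y. opT M l A a y + opT M l A b y)"
  unfolding opT_def by (simp add: Pi_add sum.distrib scaleR_add_right)

lemma opT_scale: "opT M l A (\<lambda>y. k *\<^sub>R a y) = (\<lambda>y. k *\<^sub>R opT M l A a y)"
  unfolding opT_def by (simp add: Pi_scale scaleR_sum_right[symmetric])

lemma T'_prop: "opT' M l A \<phi> \<in> XN M \<and> (\<forall>\<psi>\<in>XN M. ip M (opT' M l A \<phi>) \<psi> = ip M \<phi> (opT M l A \<psi>))"
proof -
  have "\<exists>!\<eta>. \<eta> \<in> XN M \<and> (\<forall>\<psi>\<in>XN M. ip M \<eta> \<psi> = ip M \<phi> (opT M l A \<psi>))"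
  proof (rule riesz_ex1[where P="torus M \<times> UNIV"])
    show "(\<lambda>y. 0) \<in> XN M" by (rule XN_zero)
    show "\<And>a b. a \<in> XN M \<Longrightarrow> b \<in> XN M \<Longrightarrow> (\<lambda>y. a y + b y) \<in> XN M" by (rule XN_add)
    show "\<And>a c. a \<in> XN M \<Longrightarrow> (\<lambda>y. c *\<^sub>R a y) \<in> XN M" by (rule XN_scale)
    show "\<And>a b c. ip M (\<lambda>y. a y + b y) c = ip M a c + ip M b c" by (rule ip_add)
    show "\<And>a c k. ip M (\<lambda>y. k *\<^sub>R a y) c = k * ip M a c" by (rule ip_scale)
    show "\<And>a b. ip M a b = ip M b a" by (rule ip_sym)
    show "\<And>a. a \<in> XN M \<Longrightarrow> ip M a a = 0 \<Longrightarrow> a = (\<lambda>y. 0)" by (rule ip_pos)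
    show "finite (torus M \<times> (UNIV :: 'm set))" by (simp add: finite_torus)
    show "XN M \<subseteq> Wsp (torus M \<times> UNIV)" by (rule XN_Wsp)
    show "\<And>a b. ip M \<phi> (opT M l A (\<lambda>y. a y + b y)) = ip M \<phi> (opT M l A a) + ip M \<phi> (opT M l A b)"
      by (simp add: opT_add ip_add_right)
    show "\<And>a k. ip M \<phi> (opT M l A (\<lambda>y. k *\<^sub>R a y)) = k * ip M \<phi> (opT M l A a)"
      by (simp add: opT_scale ip_scale_right)
  qed
  then show ?thesis unfolding opT'_def by (rule theI')
qed

end

lemma ip_far:
  fixes \<phi> \<psi> :: "int^'d \<Rightarrow> real^'m"
  assumes far: "\<forall>q\<in>supp M \<phi>. \<forall>b\<in>supp M \<psi>. \<not> close_pt M l q b" and l: "l \<ge> 1"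
  shows "ip M \<phi> \<psi> = 0"
  unfolding ip_def
proof (rule sum.neutral, rule ballI)
  fix y :: "int^'d" assume y: "y \<in> torus M"
  show "\<phi> y \<bullet> \<psi> y = 0"
  proof (rule ccontr)
    assume "\<phi> y \<bullet> \<psi> y \<noteq> 0"
    then have "y \<in> supp M \<phi>" "y \<in> supp M \<psi>" using y unfolding supp_def by auto
    then show False using far close_refl[OF l] by blast
  qed
qed

theorem lemma3p6:
  fixes L N l :: nat
    and A :: "real^'d^'m \<Rightarrow> real^'d^'m"
    and \<phi> \<psi> :: "int^'d \<Rightarrow> real^'m"
  assumes "odd L" and "L \<ge> 3" and "N \<ge> 1" and "CARD('d) \<ge> 2"
    and "l \<ge> 3" and "int l - 1 < int L ^ N"
    and "linear A"
    and "\<forall>F G. A F \<bullet> G = F \<bullet> A G"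
    and "\<forall>F. F \<noteq> 0 \<longrightarrow> A F \<bullet> F > 0"
    and "\<phi> \<in> XN (int L ^ N)" and "\<psi> \<in> XN (int L ^ N)"
    and "dist_inf (int L ^ N) (supp (int L ^ N) \<phi>) (supp (int L ^ N) \<psi>) > int l - 1"
  shows "ip (int L ^ N) (opT (int L ^ N) l A \<phi>) \<psi> = 0
       \<and> ip (int L ^ N) (opT' (int L ^ N) l A \<phi>) \<psi> = 0
       \<and> ip (int L ^ N) (opR (int L ^ N) l A \<phi>) \<psi> = 0
       \<and> ip (int L ^ N) (opR' (int L ^ N) l A \<phi>) \<psi> = 0"
proof -
  let ?M = "int L ^ N"
  have M: "?M > 0" using assms(2) by simp
  have lin: "linear A" by fact
  have sym: "\<forall>F G. A F \<bullet> G = F \<bullet> A G" by fact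
  have pos: "\<forall>F. F \<noteq> 0 \<longrightarrow> A F \<bullet> F > 0" by fact
  have l1: "l \<ge> 1" using assms(5) by simp
  have suppT: "supp ?M f \<subseteq> torus ?M" for f :: "int^'d \<Rightarrow> real^'m" unfolding supp_def by blast
  have far: "\<forall>q\<in>supp ?M \<phi>. \<forall>b\<in>supp ?M \<psi>. \<not> close_pt ?M l q b"
  proof (intro ballI notI)
    fix q b assume "q \<in> supp ?M \<phi>" "b \<in> supp ?M \<psi>" "close_pt ?M l q b"
    then have "dist_inf ?M (supp ?M \<phi>) (supp ?M \<psi>) \<le> int l - 1"
      using close_dist[OF _ _ suppT suppT] by blast
    then show False using assms(12) by simp
  qed
  have far': "\<forall>q\<in>supp ?M \<psi>. \<forall>b\<in>supp ?M \<phi>. \<not> close_pt ?M l q b"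
    using far close_sym by blast
  have T1: "ip ?M (opT ?M l A \<phi>) \<psi> = 0" by (rule T_zero[OF M lin sym pos far])
  have "ip ?M (opT' ?M l A \<phi>) \<psi> = ip ?M \<phi> (opT ?M l A \<psi>)"
    using T'_prop[OF M lin sym pos, of l \<phi>] assms(11) by blast
  also have "\<dots> = ip ?M (opT ?M l A \<psi>) \<phi>" by (rule ip_sym)
  also have "\<dots> = 0" by (rule T_zero[OF M lin sym pos far'])
  finally have T2: "ip ?M (opT' ?M l A \<phi>) \<psi> = 0" .
  have P: "ip ?M \<phi> \<psi> = 0" by (rule ip_far[OF far l1])
  have R1: "ip ?M (opR ?M l A \<phi>) \<psi> = 0" unfolding opR_def ip_diff P T1 by simp
  have R2: "ip ?M (opR' ?M l A \<phi>) \<psi> = 0" unfolding opR'_def ip_diff P T2 by simp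
  show ?thesis using T1 T2 R1 R2 by blast
qed

end
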